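(* Let $\mathbb{F}$ be a field of characteristic zero, $n\ge1$, $a\in(\mathbb{F}^* )^n$ and $B\in\mathbb{F}^{n\times n}$ symmetric, and suppose that $G(a,B)$ is twin-free (no two rows of $B$ are equal). Let $k\in\mathbb{N}$ and let $p_{a,B}:\mathbb{F}\mathcal{G}_k\to V^{\otimes k}$ be the linear map defined below. Then (1) the kernel of $p_{a,B}$ on $\mathbb{F}\mathcal{G}_k$ equals the ideal $\mathcal I_k=\{\gamma\in\mathbb{F}\mathcal{G}_k : \hom(\gamma\cdot F,G(a,B))=0\text{ for all }F\in\mathcal{G}_k\}$; and (2) $p_{a,B}(\mathbb{F}\mathcal{G}_k)=(V^{\otimes k})^{\Gamma(a,B)}$, the space of tensors in $V^{\otimes k}$ invariant under the action of $\Gamma(a,B)$.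
   Context: Graphs are finite multigraphs, possibly with loops and multiple edges. $G(a,B)$ is the weighted graph on vertex set $[n]$ with vertex weights $a_i$ and edge weights $B_{i,j}$. For a graph $F$, $\hom(F,G(a,B))=\sum_{\phi:V(F)\to[n]}\prod_{v\in V(F)}a_{\phi(v)}\prod_{uv\in E(F)}B_{\phi(u),\phi(v)}$ (edges with multiplicity), extended linearly to formal linear combinations of graphs. A $k$-labelled graph is a graph in which $k$ distinct vertices are labelled $1,\dots,k$ (we identify these vertices with $[k]$); $\mathcal{G}_k$ is the set of $k$-labelled graphs. For $F_1,F_2\in\mathcal{G}_k$, the product $F_1\cdot F_2\in\mathcal{G}_k$ is obtained from the disjoint union by identifying vertices with the same label; $\mathbb{F}\mathcal{G}_k$ is the corresponding semigroup algebra of finite formal $\mathbb{F}$-linear combinations of $k$-labelled graphs. When applying $\hom$ to a labelled graph the labels are forgotten. Let $V=\mathbb{F}^n$ with standard basis $e_1,\dots,e_n$. The map $p_{a,B}$ is the linear map with $$p_{a,B}(F)=\sum_{\phi:V(F)\to[n]}\Big(\prod_{v\in V(F)\setminus[k]}a_{\phi(v)}\prod_{uv\in E(F)}B_{\phi(u),\phi(v)}\Big)e_{\phi(1)}\otimes\cdots\otimes e_{\phi(k)}$$ for $F\in\mathcal{G}_k$. $\Gamma(a,B)$ is the group of permutations $\gamma$ of $[n]$ with $a_{\gamma(i)}=a_i$ and $B_{\gamma(i),\gamma(j)}=B_{i,j}$ for all $i,j$; it acts on $V^{\otimes k}$ by $\gamma(e_{i_1}\otimes\cdots\otimes e_{i_k})=e_{\gamma(i_1)}\otimes\cdots\otimes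 e_{\gamma(i_k)}$. *)

theory Defs
  imports Main "HOL-Library.Multiset" "HOL-Combinatorics.Permutations"
begin

text \<open>Finite multigraphs (loops and multiple edges allowed): a graph is a pair (m, E)
 with vertex set {0..<m} and a multiset E of edges; an edge is a pair (u,v) with u,v < m
 (orientation is irrelevant for all quantities below since B is symmetric).
 A k-labelled graph is a graph with k <= m, whose labelled vertices 1..k are the vertices 0..<k.\<close>

type_synonym mgraph = "nat \<times> (nat \<times> nat) multiset"

definition is_graph :: "mgraph \<Rightarrow> bool" where
  "is_graph F \<longleftrightarrow> (\<forall>e \<in># snd F. fst e < fst F \<and> snd e < fst F)"

definition klgraphs :: "nat \<Rightarrow> mgraph set" where
  "klgraphs k = {F. is_graph F \<and> k \<le> fst F}"

text \<open>Product of k-labelled graphs: disjoint union, glueing the labelled vertices.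
 Vertex v of F2 becomes v if v < k and v + m1 - k otherwise.\<close>

definition glue_vertex :: "nat \<Rightarrow> nat \<Rightarrow> nat \<Rightarrow> nat" where
  "glue_vertex k m1 v = (if v < k then v else v + m1 - k)"

definition lprod :: "nat \<Rightarrow> mgraph \<Rightarrow> mgraph \<Rightarrow> mgraph" where
  "lprod k F1 F2 =
     (fst F1 + fst F2 - k,
      snd F1 + image_mset (\<lambda>(u,v). (glue_vertex k (fst F1) u, glue_vertex k (fst F1) v)) (snd F2))"

definition vmaps :: "nat \<Rightarrow> mgraph \<Rightarrow> (nat \<Rightarrow> nat) set" where
  "vmaps n F = PiE {0..<fst F} (\<lambda>_. {0..<n})"

definition edge_weight :: "(nat \<Rightarrow> nat \<Rightarrow> 'f::field) \<Rightarrow> mgraph \<Rightarrow> (nat \<Rightarrow> nat) \<Rightarrow> 'f" where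
  "edge_weight B F \<phi> = prod_mset (image_mset (\<lambda>(u,v). B (\<phi> u) (\<phi> v)) (snd F))"

definition hom :: "nat \<Rightarrow> (nat \<Rightarrow> 'f::field) \<Rightarrow> (nat \<Rightarrow> nat \<Rightarrow> 'f) \<Rightarrow> mgraph \<Rightarrow> 'f" where
  "hom n a B F = (\<Sum>\<phi> \<in> vmaps n F. (\<Prod>v<fst F. a (\<phi> v)) * edge_weight B F \<phi>)"

definition lincombs :: "nat \<Rightarrow> (mgraph \<Rightarrow> 'f::field) set" where
  "lincombs k = {\<gamma>. finite {F. \<gamma> F \<noteq> 0} \<and> (\<forall>F. \<gamma> F \<noteq> 0 \<longrightarrow> F \<in> klgraphs k)}"

definition supp :: "(mgraph \<Rightarrow> 'f::field) \<Rightarrow> mgraph set" where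
  "supp \<gamma> = {F. \<gamma> F \<noteq> 0}"

definition hom_prod :: "nat \<Rightarrow> (nat \<Rightarrow> 'f::field) \<Rightarrow> (nat \<Rightarrow> nat \<Rightarrow> 'f) \<Rightarrow> nat
    \<Rightarrow> (mgraph \<Rightarrow> 'f) \<Rightarrow> mgraph \<Rightarrow> 'f" where
  "hom_prod n a B k \<gamma> F = (\<Sum>F' \<in> supp \<gamma>. \<gamma> F' * hom n a B (lprod k F' F))"

definition ideal_I :: "nat \<Rightarrow> (nat \<Rightarrow> 'f::field) \<Rightarrow> (nat \<Rightarrow> nat \<Rightarrow> 'f) \<Rightarrow> nat \<Rightarrow> (mgraph \<Rightarrow> 'f) set" where
  "ideal_I n a B k = {\<gamma> \<in> lincombs k. \<forall>F \<in> klgraphs k. hom_prod n a B k \<gamma> F = 0}"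

text \<open>Tensors in V^{\<otimes>k}, V = F^n: coefficient functions on index lists
 [i_1,...,i_k] (entries < n), zero on all other lists. The list xs stands for
 e_{xs!0} \<otimes> ... \<otimes> e_{xs!(k-1)}.\<close>

definition idx_lists :: "nat \<Rightarrow> nat \<Rightarrow> nat list set" where
  "idx_lists n k = {xs. length xs = k \<and> set xs \<subseteq> {0..<n}}"

definition tensors :: "nat \<Rightarrow> nat \<Rightarrow> (nat list \<Rightarrow> 'f::field) set" where
  "tensors n k = {T. \<forall>xs. xs \<notin> idx_lists n k \<longrightarrow> T xs = 0}"

definition p_graph :: "nat \<Rightarrow> (nat \<Rightarrow> 'f::field) \<Rightarrow> (nat \<Rightarrow> nat \<Rightarrow> 'f) \<Rightarrow> nat
    \<Rightarrow> mgraph \<Rightarrow> nat list \<Rightarrow> 'f" where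
  "p_graph n a B k F xs =
     (if xs \<in> idx_lists n k then
        (\<Sum>\<phi> \<in> {\<phi> \<in> vmaps n F. \<forall>j<k. \<phi> j = xs ! j}.
            (\<Prod>v\<in>{k..<fst F}. a (\<phi> v)) * edge_weight B F \<phi>)
      else 0)"

definition p_lin :: "nat \<Rightarrow> (nat \<Rightarrow> 'f::field) \<Rightarrow> (nat \<Rightarrow> nat \<Rightarrow> 'f) \<Rightarrow> nat
    \<Rightarrow> (mgraph \<Rightarrow> 'f) \<Rightarrow> nat list \<Rightarrow> 'f" where
  "p_lin n a B k \<gamma> = (\<lambda>xs. \<Sum>F \<in> supp \<gamma>. \<gamma> F * p_graph n a B k F xs)"

definition Aut :: "nat \<Rightarrow> (nat \<Rightarrow> 'f::field) \<Rightarrow> (nat \<Rightarrow> nat \<Rightarrow> 'f) \<Rightarrow> (nat \<Rightarrow> nat) set" where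
  "Aut n a B = {g. g permutes {0..<n} \<and> (\<forall>i<n. a (g i) = a i)
                   \<and> (\<forall>i<n. \<forall>j<n. B (g i) (g j) = B i j)}"

text \<open>g(e_{i_1}\<otimes>...\<otimes>e_{i_k}) = e_{g i_1}\<otimes>...; so (g T)(map g xs) = T xs.\<close>

definition tensor_act :: "(nat \<Rightarrow> nat) \<Rightarrow> (nat list \<Rightarrow> 'f) \<Rightarrow> nat list \<Rightarrow> 'f" where
  "tensor_act g T = (\<lambda>ys. T (map (inv g) ys))"

definition invariant_tensors :: "nat \<Rightarrow> (nat \<Rightarrow> 'f::field) \<Rightarrow> (nat \<Rightarrow> nat \<Rightarrow> 'f) \<Rightarrow> nat
    \<Rightarrow> (nat list \<Rightarrow> 'f) set" where
  "invariant_tensors n a B k = {T \<in> tensors n k. \<forall>g \<in> Aut n a B. tensor_act g T = T}"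

definition twin_free :: "nat \<Rightarrow> (nat \<Rightarrow> nat \<Rightarrow> 'f) \<Rightarrow> bool" where
  "twin_free n B \<longleftrightarrow> (\<forall>i<n. \<forall>j<n. i \<noteq> j \<longrightarrow> (\<exists>l<n. B i l \<noteq> B j l))"

end

theory Submission
  imports Defs
begin

lemma finite_idx[simp]: "finite (idx_lists n k)"
proof -
  have "idx_lists n k = {xs. set xs \<subseteq> {0..<n} \<and> length xs = k}" by (auto simp: idx_lists_def)
  then show ?thesis using finite_lists_length_eq[of "{0..<n}" k] by simp
qed

lemma finite_vmaps[simp]: "finite (vmaps n F)"
  unfolding vmaps_def by (simp add: finite_PiE)

lemma idx_nth: "t \<in> idx_lists n m \<Longrightarrow> i < m \<Longrightarrow> t ! i < n"
  unfolding idx_lists_def by (auto dest!: nth_mem)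

lemma p_graph_full:
  assumes "is_graph F" "fst F = m" "t \<in> idx_lists n m"
  shows "p_graph n a B m F t = edge_weight B F (\<lambda>i. t!i)"
proof -
  let ?\<phi> = "restrict (\<lambda>i. t!i) {0..<m}"
  have S: "{\<phi> \<in> vmaps n F. \<forall>j<m. \<phi> j = t!j} = {?\<phi>}"
  proof safe
    fix \<phi> assume "\<phi> \<in> vmaps n F" "\<forall>j<m. \<phi> j = t!j"
    then show "\<phi> = ?\<phi>" using assms(2) unfolding vmaps_def
      by (auto simp: PiE_def extensional_def fun_eq_iff)
  next
    show "?\<phi> \<in> vmaps n F" using assms idx_nth[OF assms(3)] unfolding vmaps_def by auto
  qed auto
  have "edge_weight B F ?\<phi> = edge_weight B F (\<lambda>i. t!i)"
    unfolding edge_weight_def using assms(1,2)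
    by (intro arg_cong[where f=prod_mset] image_mset_cong) (auto simp: is_graph_def)
  then show ?thesis using assms S by (simp add: p_graph_def)
qed

lemma edge_graph: "u < m \<Longrightarrow> v < m \<Longrightarrow> (m, {#(u,v)#}) \<in> klgraphs m"
  by (auto simp: klgraphs_def is_graph_def)

lemma p_graph_edge:
  assumes "u < m" "v < m" "t \<in> idx_lists n m"
  shows "p_graph n a B m (m, {#(u,v)#}) t = B (t!u) (t!v)"
  using p_graph_full[of "(m, {#(u,v)#})" m t n a B] assms
  by (simp add: is_graph_def edge_weight_def)

lemma p_graph_out: "xs \<notin> idx_lists n k \<Longrightarrow> p_graph n a B k F xs = 0"
  by (simp add: p_graph_def)

lemma p_graph_hom:
  assumes "is_graph F"
  shows "p_graph n a B 0 F [] = hom n a B F"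
proof -
  have "{0..<fst F} = {..<fst F}" by auto
  then show ?thesis by (simp add: p_graph_def hom_def idx_lists_def)
qed


lemma p_graph_unlabel1:
  assumes "is_graph F" "Suc m \<le> fst F" "length xs = m"
  shows "p_graph n a B m F xs = (\<Sum>w<n. a w * p_graph n a B (Suc m) F (xs@[w]))"
proof (cases "xs \<in> idx_lists n m")
  case False
  then have "\<And>w. xs @ [w] \<notin> idx_lists n (Suc m)" by (auto simp: idx_lists_def)
  then show ?thesis using False by (simp add: p_graph_def)
next
  case True
  define M where "M = fst F"
  define S where "S = {\<phi> \<in> vmaps n F. \<forall>j<m. \<phi> j = xs!j}"
  define h where "h = (\<lambda>\<phi>. (\<Prod>v\<in>{m..<M}. a (\<phi> v)) * edge_weight B F \<phi>)"
  define h' where "h' = (\<lambda>\<phi>. (\<Prod>v\<in>{Suc m..<M}. a (\<phi> v)) * edge_weight B F \<phi>)"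
  define Sw where "Sw = (\<lambda>w. {\<phi> \<in> vmaps n F. \<forall>j<Suc m. \<phi> j = (xs@[w])!j})"
  have fS: "finite S" unfolding S_def by simp
  have img: "(\<lambda>\<phi>. \<phi> m) ` S \<subseteq> {..<n}"
    using assms(2) unfolding S_def vmaps_def M_def by (auto simp: PiE_def Pi_def)
  have "p_graph n a B m F xs = sum h S" using True by (simp add: p_graph_def S_def h_def M_def)
  also have "\<dots> = (\<Sum>w<n. sum h {\<phi>. \<phi> \<in> S \<and> \<phi> m = w})"
    using sum.group[OF fS _ img, of h] by simp
  also have "\<dots> = (\<Sum>w<n. a w * p_graph n a B (Suc m) F (xs@[w]))"
  proof (rule sum.cong[OF refl])
    fix w assume w: "w \<in> {..<n}"
    have xw: "xs@[w] \<in> idx_lists n (Suc m)" using True w by (auto simp: idx_lists_def)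
    have eqS: "{\<phi>. \<phi> \<in> S \<and> \<phi> m = w} = Sw w"
      unfolding S_def Sw_def using assms(3)
      by (auto simp: nth_append less_Suc_eq)
    have "sum h (Sw w) = sum (\<lambda>\<phi>. a w * h' \<phi>) (Sw w)"
    proof (rule sum.cong[OF refl])
      fix \<phi> assume "\<phi> \<in> Sw w"
      then have "\<phi> m = w" unfolding Sw_def using assms(3) by (auto simp: nth_append)
      moreover have "m < M" using assms(2) M_def by simp
      ultimately show "h \<phi> = a w * h' \<phi>" unfolding h_def h'_def
        by (simp add: prod.atLeast_Suc_lessThan mult.assoc)
    qed
    also have "\<dots> = a w * p_graph n a B (Suc m) F (xs@[w])"
      using xw by (simp add: p_graph_def sum_distrib_left Sw_def h'_def M_def)
    finally show "sum h {\<phi>. \<phi> \<in> S \<and> \<phi> m = w} = a w * p_graph n a B (Suc m) F (xs@[w])"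
      using eqS by simp
  qed
  finally show ?thesis .
qed


lemma idx_lists_0[simp]: "idx_lists n 0 = {[]}" by (auto simp: idx_lists_def)

lemma sum_idx_Suc:
  "(\<Sum>ws\<in>idx_lists n (Suc r). f ws) = (\<Sum>ws\<in>idx_lists n r. \<Sum>w<n. f (ws@[w]))"
proof -
  have im: "idx_lists n (Suc r) = (\<lambda>(ws,w). ws@[w]) ` (idx_lists n r \<times> {..<n})"
  proof safe
    fix xs assume xs: "xs \<in> idx_lists n (Suc r)"
    then have "xs \<noteq> []" by (auto simp: idx_lists_def)
    then have "xs = butlast xs @ [last xs]" by simp
    moreover have "butlast xs \<in> idx_lists n r" "last xs < n" using xs \<open>xs \<noteq> []\<close>
      by (auto simp: idx_lists_def dest: in_set_butlastD intro!: last_in_set)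
    ultimately show "xs \<in> (\<lambda>(ws,w). ws@[w]) ` (idx_lists n r \<times> {..<n})" by force
  qed (auto simp: idx_lists_def)
  have inj: "inj_on (\<lambda>(ws,w). ws@[w]) (idx_lists n r \<times> {..<n})"
    by (auto simp: inj_on_def)
  show ?thesis unfolding im sum.reindex[OF inj] by (simp add: sum.cartesian_product case_prod_unfold)
qed

lemma p_graph_unlabel:
  assumes "is_graph F" "m + r \<le> fst F" "length xs = m"
  shows "p_graph n a B m F xs =
    (\<Sum>ws\<in>idx_lists n r. prod_list (map a ws) * p_graph n a B (m+r) F (xs@ws))"
  using assms(2)
proof (induction r)
  case 0 then show ?case by simp
next
  case (Suc r)
  have "p_graph n a B m F xs =
    (\<Sum>ws\<in>idx_lists n r. prod_list (map a ws) * p_graph n a B (m+r) F (xs@ws))"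
    using Suc by simp
  also have "\<dots> = (\<Sum>ws\<in>idx_lists n r. \<Sum>w<n. prod_list (map a (ws@[w])) * p_graph n a B (m+Suc r) F (xs@(ws@[w])))"
  proof (rule sum.cong[OF refl])
    fix ws assume ws: "ws \<in> idx_lists n r"
    have "p_graph n a B (m+r) F (xs@ws) = (\<Sum>w<n. a w * p_graph n a B (Suc (m+r)) F ((xs@ws)@[w]))"
      using p_graph_unlabel1[OF assms(1), of "m+r" "xs@ws" n a B] Suc.prems ws assms(3) by (simp add: idx_lists_def)
    then show "prod_list (map a ws) * p_graph n a B (m+r) F (xs@ws) = (\<Sum>w<n. prod_list (map a (ws@[w])) * p_graph n a B (m+Suc r) F (xs@(ws@[w])))"
      by (simp add: sum_distrib_left mult_ac)
  qed
  also have "\<dots> = (\<Sum>ws\<in>idx_lists n (Suc r). prod_list (map a ws) * p_graph n a B (m+Suc r) F (xs@ws))"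
    by (rule sum_idx_Suc[symmetric])
  finally show ?case .
qed


lemma lprod_klgraph:
  assumes "F1 \<in> klgraphs k" "F2 \<in> klgraphs k"
  shows "lprod k F1 F2 \<in> klgraphs k"
  using assms unfolding klgraphs_def is_graph_def lprod_def glue_vertex_def
  by (fastforce split: if_splits)

lemma p_graph_lprod:
  assumes F1: "F1 \<in> klgraphs k" and F2: "F2 \<in> klgraphs k" and xs: "xs \<in> idx_lists n k"
  shows "p_graph n a B k (lprod k F1 F2) xs = p_graph n a B k F1 xs * p_graph n a B k F2 xs"
proof -
  define m1 where "m1 = fst F1"
  define m2 where "m2 = fst F2"
  define M where "M = m1 + m2 - k"
  have km1: "k \<le> m1" and km2: "k \<le> m2" using F1 F2 by (auto simp: klgraphs_def m1_def m2_def)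
  have g1: "\<forall>e\<in>#snd F1. fst e < m1 \<and> snd e < m1" using F1 by (auto simp: klgraphs_def is_graph_def m1_def)
  have g2: "\<forall>e\<in>#snd F2. fst e < m2 \<and> snd e < m2" using F2 by (auto simp: klgraphs_def is_graph_def m2_def)
  define G where "G = lprod k F1 F2"
  have fG: "fst G = M" by (simp add: G_def lprod_def M_def m1_def m2_def)
  define S where "S = {\<phi> \<in> vmaps n G. \<forall>j<k. \<phi> j = xs!j}"
  define S1 where "S1 = {\<phi> \<in> vmaps n F1. \<forall>j<k. \<phi> j = xs!j}"
  define S2 where "S2 = {\<phi> \<in> vmaps n F2. \<forall>j<k. \<phi> j = xs!j}"
  define h where "h = (\<lambda>\<phi>. (\<Prod>v\<in>{k..<M}. a (\<phi> v)) * edge_weight B G \<phi>)"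
  define h1 where "h1 = (\<lambda>\<phi>. (\<Prod>v\<in>{k..<m1}. a (\<phi> v)) * edge_weight B F1 \<phi>)"
  define h2 where "h2 = (\<lambda>\<phi>. (\<Prod>v\<in>{k..<m2}. a (\<phi> v)) * edge_weight B F2 \<phi>)"
  define join :: "(nat \<Rightarrow> nat) \<times> (nat \<Rightarrow> nat) \<Rightarrow> nat \<Rightarrow> nat" where
    "join = (\<lambda>(\<phi>1,\<phi>2) v. if v < m1 then \<phi>1 v else if v < M then \<phi>2 (v + k - m1) else undefined)"
  define split :: "(nat \<Rightarrow> nat) \<Rightarrow> (nat \<Rightarrow> nat) \<times> (nat \<Rightarrow> nat)" where
    "split = (\<lambda>\<psi>. (restrict \<psi> {0..<m1}, \<lambda>v. if v < k then \<psi> v else if v < m2 then \<psi> (v + m1 - k) else undefined))"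
  have LHS: "p_graph n a B k G xs = sum h S" using xs by (simp add: p_graph_def S_def h_def fG)
  have RHS: "p_graph n a B k F1 xs * p_graph n a B k F2 xs = (\<Sum>p\<in>S1\<times>S2. h1 (fst p) * h2 (snd p))"
    using xs by (simp add: p_graph_def S1_def S2_def h1_def h2_def m1_def m2_def sum_product sum.cartesian_product case_prod_unfold)
  have "(\<Sum>p\<in>S1\<times>S2. h1 (fst p) * h2 (snd p)) = sum h S"
  proof (rule sum.reindex_bij_witness[where i=split and j=join])
    fix \<psi> assume "\<psi> \<in> S"
    then have \<psi>: "\<psi> \<in> vmaps n G" "\<forall>j<k. \<psi> j = xs!j" by (auto simp: S_def)
    then have ext: "\<And>v. v \<ge> M \<Longrightarrow> \<psi> v = undefined" and rng: "\<And>v. v < M \<Longrightarrow> \<psi> v < n"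
      by (auto simp: vmaps_def fG PiE_def extensional_def Pi_def)
    show "join (split \<psi>) = \<psi>"
      using km1 km2 ext by (auto simp: join_def split_def fun_eq_iff M_def)
    show "split \<psi> \<in> S1 \<times> S2"
      using km1 km2 rng \<psi>(2) idx_nth[OF xs] by (auto simp: split_def S1_def S2_def vmaps_def m1_def m2_def M_def PiE_def extensional_def Pi_def)
  next
    fix p assume "p \<in> S1 \<times> S2"
    then obtain \<phi>1 \<phi>2 where p: "p = (\<phi>1,\<phi>2)" "\<phi>1 \<in> S1" "\<phi>2 \<in> S2" by auto
    then have e1: "\<And>v. v \<ge> m1 \<Longrightarrow> \<phi>1 v = undefined" and r1: "\<And>v. v < m1 \<Longrightarrow> \<phi>1 v < n"
      and e2: "\<And>v. v \<ge> m2 \<Longrightarrow> \<phi>2 v = undefined" and r2: "\<And>v. v < m2 \<Longrightarrow> \<phi>2 v < n"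
      and l1: "\<forall>j<k. \<phi>1 j = xs!j" and l2: "\<forall>j<k. \<phi>2 j = xs!j"
      by (auto simp: S1_def S2_def vmaps_def m1_def m2_def PiE_def extensional_def Pi_def)
    show "split (join p) = p"
      using km1 km2 e1 e2 l1 l2 unfolding p by (auto simp: join_def split_def fun_eq_iff M_def)
    show "join p \<in> S"
      using km1 km2 r1 r2 l1 unfolding p
      by (auto simp: join_def S_def vmaps_def fG M_def PiE_def extensional_def Pi_def)
    have jv: "\<And>v. join p v = (if v < m1 then \<phi>1 v else if v < M then \<phi>2 (v + k - m1) else undefined)"
      unfolding p join_def by simp
    have A: "(\<Prod>v\<in>{k..<M}. a (join p v)) = (\<Prod>v\<in>{k..<m1}. a (\<phi>1 v)) * (\<Prod>v\<in>{k..<m2}. a (\<phi>2 v))"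
    proof -
      have "(\<Prod>v\<in>{k..<M}. a (join p v)) = (\<Prod>v\<in>{k..<m1}. a (join p v)) * (\<Prod>v\<in>{m1..<M}. a (join p v))"
        using km1 km2 by (simp add: M_def prod.atLeastLessThan_concat)
      moreover have "(\<Prod>v\<in>{k..<m1}. a (join p v)) = (\<Prod>v\<in>{k..<m1}. a (\<phi>1 v))"
        by (rule prod.cong) (auto simp: jv)
      moreover have "(\<Prod>v\<in>{m1..<M}. a (join p v)) = (\<Prod>v\<in>{k..<m2}. a (\<phi>2 v))"
      proof -
        have "{m1..<M} = {k + (m1-k)..<m2 + (m1-k)}" using km1 km2 by (auto simp: M_def)
        then have "(\<Prod>v\<in>{m1..<M}. a (join p v)) = (\<Prod>v\<in>{k..<m2}. a (join p (v + (m1-k))))"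
          by (simp add: prod.shift_bounds_nat_ivl)
        also have "\<dots> = (\<Prod>v\<in>{k..<m2}. a (\<phi>2 v))"
          using km1 km2 by (intro prod.cong) (auto simp: jv M_def)
        finally show ?thesis .
      qed
      ultimately show ?thesis by simp
    qed
    have E: "edge_weight B G (join p) = edge_weight B F1 \<phi>1 * edge_weight B F2 \<phi>2"
    proof -
      have "edge_weight B G (join p) =
          prod_mset (image_mset (\<lambda>(u,v). B (join p u) (join p v)) (snd F1)) *
          prod_mset (image_mset ((\<lambda>(u,v). B (join p u) (join p v)) \<circ> (\<lambda>(u,v). (glue_vertex k m1 u, glue_vertex k m1 v))) (snd F2))"
        by (simp add: edge_weight_def G_def lprod_def m1_def image_mset.compositionality)
      also have "image_mset (\<lambda>(u,v). B (join p u) (join p v)) (snd F1) = image_mset (\<lambda>(u,v). B (\<phi>1 u) (\<phi>1 v)) (snd F1)"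
        using g1 by (intro image_mset_cong) (auto simp: jv)
      also have "image_mset ((\<lambda>(u,v). B (join p u) (join p v)) \<circ> (\<lambda>(u,v). (glue_vertex k m1 u, glue_vertex k m1 v))) (snd F2)
          = image_mset (\<lambda>(u,v). B (\<phi>2 u) (\<phi>2 v)) (snd F2)"
      proof (intro image_mset_cong)
        fix e assume "e \<in># snd F2"
        then have e: "fst e < m2" "snd e < m2" using g2 by auto
        have gl: "\<And>u. u < m2 \<Longrightarrow> join p (glue_vertex k m1 u) = \<phi>2 u"
          using km1 km2 l1 l2 by (auto simp: jv glue_vertex_def M_def)
        show "((\<lambda>(u,v). B (join p u) (join p v)) \<circ> (\<lambda>(u,v). (glue_vertex k m1 u, glue_vertex k m1 v))) e = (\<lambda>(u,v). B (\<phi>2 u) (\<phi>2 v)) e"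
          using e gl by (cases e) auto
      qed
      finally show ?thesis by (simp add: edge_weight_def)
    qed
    show "h (join p) = h1 (fst p) * h2 (snd p)"
      unfolding h_def h1_def h2_def using A E unfolding p by (simp add: mult_ac)
  qed
  then show ?thesis using LHS RHS G_def by simp
qed


lemma aut_lt: "g \<in> Aut n a B \<Longrightarrow> x < n \<Longrightarrow> g x < n"
  unfolding Aut_def using permutes_in_image[of g "{0..<n}" x] by auto

lemma aut_inv_lt: "g \<in> Aut n a B \<Longrightarrow> x < n \<Longrightarrow> inv g x < n"
  unfolding Aut_def using permutes_in_image[of "inv g" "{0..<n}" x] permutes_inv[of g "{0..<n}"] by auto

lemma aut_inv1: "g \<in> Aut n a B \<Longrightarrow> inv g (g x) = x"
  unfolding Aut_def using permutes_inverses(2) by fastforce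

lemma aut_inv2: "g \<in> Aut n a B \<Longrightarrow> g (inv g x) = x"
  unfolding Aut_def using permutes_inverses(1) by fastforce

lemma map_aut_idx: "g \<in> Aut n a B \<Longrightarrow> xs \<in> idx_lists n k \<Longrightarrow> map g xs \<in> idx_lists n k"
  using aut_lt by (fastforce simp: idx_lists_def)

lemma p_graph_aut:
  assumes g: "g \<in> Aut n a B" and F: "F \<in> klgraphs k" and xs: "xs \<in> idx_lists n k"
  shows "p_graph n a B k F (map g xs) = p_graph n a B k F xs"
proof -
  define m where "m = fst F"
  have km: "k \<le> m" using F by (auto simp: klgraphs_def m_def)
  have gr: "\<forall>e\<in>#snd F. fst e < m \<and> snd e < m" using F by (auto simp: klgraphs_def is_graph_def m_def)
  have ga: "\<And>i. i < n \<Longrightarrow> a (g i) = a i" and gB: "\<And>i j. i < n \<Longrightarrow> j < n \<Longrightarrow> B (g i) (g j) = B i j"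
    using g by (auto simp: Aut_def)
  define S where "S = {\<phi> \<in> vmaps n F. \<forall>j<k. \<phi> j = xs!j}"
  define S' where "S' = {\<phi> \<in> vmaps n F. \<forall>j<k. \<phi> j = (map g xs)!j}"
  define h where "h = (\<lambda>\<phi>. (\<Prod>v\<in>{k..<m}. a (\<phi> v)) * edge_weight B F \<phi>)"
  have L: "p_graph n a B k F (map g xs) = sum h S'"
    using map_aut_idx[OF g xs] by (simp add: p_graph_def S'_def h_def m_def)
  have R: "p_graph n a B k F xs = sum h S"
    using xs by (simp add: p_graph_def S_def h_def m_def)
  have lx: "length xs = k" using xs by (simp add: idx_lists_def)
  have "sum h S = sum h S'"
  proof (rule sum.reindex_bij_witness[where i="\<lambda>\<psi>. restrict (inv g \<circ> \<psi>) {0..<m}" and j="\<lambda>\<phi>. restrict (g \<circ> \<phi>) {0..<m}"])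
    fix \<phi> assume "\<phi> \<in> S"
    then have e: "\<And>v. v \<ge> m \<Longrightarrow> \<phi> v = undefined" and r: "\<And>v. v < m \<Longrightarrow> \<phi> v < n"
      and l: "\<forall>j<k. \<phi> j = xs!j"
      by (auto simp: S_def vmaps_def m_def PiE_def extensional_def Pi_def)
    show "restrict (inv g \<circ> restrict (g \<circ> \<phi>) {0..<m}) {0..<m} = \<phi>"
      using e aut_inv1[OF g] by (auto simp: fun_eq_iff)
    show "restrict (g \<circ> \<phi>) {0..<m} \<in> S'"
      using r l km lx aut_lt[OF g] by (auto simp: S'_def vmaps_def m_def)
    have "(\<Prod>v\<in>{k..<m}. a (restrict (g \<circ> \<phi>) {0..<m} v)) = (\<Prod>v\<in>{k..<m}. a (\<phi> v))"
      using r ga by (intro prod.cong) auto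
    moreover have "edge_weight B F (restrict (g \<circ> \<phi>) {0..<m}) = edge_weight B F \<phi>"
      unfolding edge_weight_def using gr r gB
      by (intro arg_cong[where f=prod_mset] image_mset_cong) auto
    ultimately show "h (restrict (g \<circ> \<phi>) {0..<m}) = h \<phi>" by (simp add: h_def)
  next
    fix \<psi> assume "\<psi> \<in> S'"
    then have e: "\<And>v. v \<ge> m \<Longrightarrow> \<psi> v = undefined" and r: "\<And>v. v < m \<Longrightarrow> \<psi> v < n"
      and l: "\<forall>j<k. \<psi> j = (map g xs)!j"
      by (auto simp: S'_def vmaps_def m_def PiE_def extensional_def Pi_def)
    show "restrict (g \<circ> restrict (inv g \<circ> \<psi>) {0..<m}) {0..<m} = \<psi>"
      using e aut_inv2[OF g] by (auto simp: fun_eq_iff)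
    show "restrict (inv g \<circ> \<psi>) {0..<m} \<in> S"
      using r l km lx aut_inv_lt[OF g] aut_inv1[OF g] by (auto simp: S_def vmaps_def m_def)
  qed
  then show ?thesis using L R by simp
qed


inductive_set genA :: "nat \<Rightarrow> (nat \<Rightarrow> 'f::field) \<Rightarrow> (nat \<Rightarrow> nat \<Rightarrow> 'f) \<Rightarrow> nat \<Rightarrow> (nat list \<Rightarrow> 'f) set"
  for n a B k where
  base: "F \<in> klgraphs k \<Longrightarrow> p_graph n a B k F \<in> genA n a B k"
| zero: "(\<lambda>_. 0) \<in> genA n a B k"
| add: "f \<in> genA n a B k \<Longrightarrow> g \<in> genA n a B k \<Longrightarrow> (\<lambda>x. f x + g x) \<in> genA n a B k"
| smult: "f \<in> genA n a B k \<Longrightarrow> (\<lambda>x. c * f x) \<in> genA n a B k"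

lemma genA_out: "f \<in> genA n a B k \<Longrightarrow> xs \<notin> idx_lists n k \<Longrightarrow> f xs = 0"
  by (induction rule: genA.induct) (auto simp: p_graph_out)

lemma genA_mult_base:
  assumes "F \<in> klgraphs k" "g \<in> genA n a B k"
  shows "(\<lambda>x. p_graph n a B k F x * g x) \<in> genA n a B k"
  using assms(2)
proof (induction rule: genA.induct)
  case (base F')
  have "(\<lambda>x. p_graph n a B k F x * p_graph n a B k F' x) = p_graph n a B k (lprod k F F')"
  proof
    fix x show "p_graph n a B k F x * p_graph n a B k F' x = p_graph n a B k (lprod k F F') x"
      using p_graph_lprod[OF assms(1) base, where xs=x and n=n and a=a and B=B] by (cases "x \<in> idx_lists n k") (auto simp: p_graph_out)
  qed
  then show ?case using genA.base[OF lprod_klgraph[OF assms(1) base]] by simp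
next
  case zero then show ?case by (simp add: genA.zero)
next
  case (add f g)
  then show ?case using genA.add[OF add.IH] by (simp add: distrib_left)
next
  case (smult f c)
  then show ?case using genA.smult[OF smult.IH, of c] by (simp add: mult_ac)
qed

lemma genA_mult:
  assumes "f \<in> genA n a B k" "g \<in> genA n a B k"
  shows "(\<lambda>x. f x * g x) \<in> genA n a B k"
  using assms(1)
proof (induction rule: genA.induct)
  case (base F) then show ?case using genA_mult_base[OF base assms(2)] by simp
next
  case zero then show ?case by (simp add: genA.zero)
next
  case (add f h)
  then show ?case using genA.add[OF add.IH] by (simp add: distrib_right)
next
  case (smult f c)
  then show ?case using genA.smult[OF smult.IH, of c] by (simp add: mult_ac)
qed

definition one_t :: "nat \<Rightarrow> nat \<Rightarrow> nat list \<Rightarrow> 'f::field" where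
  "one_t n k = (\<lambda>xs. if xs \<in> idx_lists n k then 1 else 0)"

lemma one_genA: "one_t n k \<in> genA n a B k"
proof -
  have "(k, {#}) \<in> klgraphs k" by (simp add: klgraphs_def is_graph_def)
  moreover have "p_graph n a B k (k, {#}) = one_t n k"
    using p_graph_full[of "(k, {#})" k _ n a B]
    by (auto simp: fun_eq_iff one_t_def p_graph_out is_graph_def edge_weight_def)
  ultimately show ?thesis using genA.base by metis
qed

lemma genA_sum:
  assumes "finite I" "\<forall>i\<in>I. f i \<in> genA n a B k"
  shows "(\<lambda>x. \<Sum>i\<in>I. f i x) \<in> genA n a B k"
  using assms
proof (induction rule: finite_induct)
  case empty then show ?case by (simp add: genA.zero)
next
  case (insert i I)
  then show ?case using genA.add[of "f i" n a B k "\<lambda>x. \<Sum>i\<in>I. f i x"] by simp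
qed

lemma genA_prod:
  assumes "finite D" "\<forall>i\<in>D. h i \<in> genA n a B k"
  shows "(\<lambda>x. (\<Prod>i\<in>D. h i x) * one_t n k x) \<in> genA n a B k"
  using assms
proof (induction rule: finite_induct)
  case empty then show ?case using one_genA by simp
next
  case (insert i I)
  then show ?case using genA_mult[of "h i" n a B k "\<lambda>x. (\<Prod>i\<in>I. h i x) * one_t n k x"]
    by (simp add: mult_ac)
qed

definition eqv :: "nat \<Rightarrow> (nat \<Rightarrow> 'f::field) \<Rightarrow> (nat \<Rightarrow> nat \<Rightarrow> 'f) \<Rightarrow> nat \<Rightarrow> nat list \<Rightarrow> nat list \<Rightarrow> bool" where
  "eqv n a B k x y \<longleftrightarrow> (\<forall>F\<in>klgraphs k. p_graph n a B k F x = p_graph n a B k F y)"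

lemma genA_eqv: "f \<in> genA n a B k \<Longrightarrow> eqv n a B k x y \<Longrightarrow> f x = f y"
  by (induction rule: genA.induct) (auto simp: eqv_def)

lemma eqv_refl: "eqv n a B k x x" by (simp add: eqv_def)
lemma eqv_sym: "eqv n a B k x y \<Longrightarrow> eqv n a B k y x" by (simp add: eqv_def)
lemma eqv_trans: "eqv n a B k x y \<Longrightarrow> eqv n a B k y z \<Longrightarrow> eqv n a B k x z" by (simp add: eqv_def)

definition ind :: "nat \<Rightarrow> (nat \<Rightarrow> 'f::field) \<Rightarrow> (nat \<Rightarrow> nat \<Rightarrow> 'f) \<Rightarrow> nat \<Rightarrow> nat list \<Rightarrow> nat list \<Rightarrow> 'f" where
  "ind n a B k x = (\<lambda>t. if t \<in> idx_lists n k \<and> eqv n a B k t x then 1 else 0)"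

lemma ind_genA:
  assumes x: "x \<in> idx_lists n k"
  shows "ind n a B k x \<in> genA n a B k"
proof -
  define D where "D = {y \<in> idx_lists n k. \<not> eqv n a B k y x}"
  have fD: "finite D" by (simp add: D_def)
  have "\<forall>y\<in>D. \<exists>F\<in>klgraphs k. p_graph n a B k F y \<noteq> p_graph n a B k F x"
    by (auto simp: D_def eqv_def)
  then obtain Fy where Fy: "\<And>y. y \<in> D \<Longrightarrow> Fy y \<in> klgraphs k \<and> p_graph n a B k (Fy y) y \<noteq> p_graph n a B k (Fy y) x"
    by metis
  define h where "h = (\<lambda>y t. (1 / (p_graph n a B k (Fy y) x - p_graph n a B k (Fy y) y)) *
       (p_graph n a B k (Fy y) t + (- p_graph n a B k (Fy y) y) * one_t n k t))"
  have hA: "\<forall>y\<in>D. h y \<in> genA n a B k"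
  proof
    fix y assume "y \<in> D"
    then have "p_graph n a B k (Fy y) \<in> genA n a B k" using Fy genA.base by blast
    then show "h y \<in> genA n a B k" unfolding h_def
      by (intro genA.smult genA.add one_genA genA.smult[where f="one_t n k"])
  qed
  have "ind n a B k x = (\<lambda>t. (\<Prod>y\<in>D. h y t) * one_t n k t)"
  proof
    fix t
    show "ind n a B k x t = (\<Prod>y\<in>D. h y t) * one_t n k t"
    proof (cases "t \<in> idx_lists n k")
      case False then show ?thesis by (simp add: ind_def one_t_def)
    next
      case True
      show ?thesis
      proof (cases "eqv n a B k t x")
        case True': True
        have "\<forall>y\<in>D. h y t = 1"
        proof
          fix y assume y: "y \<in> D"
          have "p_graph n a B k (Fy y) t = p_graph n a B k (Fy y) x"
            using True' Fy[OF y] by (auto simp: eqv_def)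
          moreover have "p_graph n a B k (Fy y) x - p_graph n a B k (Fy y) y \<noteq> 0" using Fy[OF y] by (metis eq_iff_diff_eq_0)
          ultimately show "h y t = 1" using True by (simp add: h_def one_t_def)
        qed
        then show ?thesis using True True' by (simp add: ind_def one_t_def)
      next
        case False
        then have tD: "t \<in> D" using True by (simp add: D_def)
        have "h t t = 0" using True by (simp add: h_def one_t_def)
        then have "(\<Prod>y\<in>D. h y t) = 0" using fD tD by (meson prod_zero_iff)
        then show ?thesis using False by (simp add: ind_def)
      qed
    qed
  qed
  then show ?thesis using genA_prod[OF fD hA] by simp
qed

lemma ind_self: "x \<in> idx_lists n k \<Longrightarrow> ind n a B k x x = 1"
  by (simp add: ind_def eqv_refl)


lemma p_lin_U:
  assumes "finite U" "supp \<gamma> \<subseteq> U"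
  shows "p_lin n a B k \<gamma> xs = (\<Sum>F\<in>U. \<gamma> F * p_graph n a B k F xs)"
  unfolding p_lin_def using assms
  by (intro sum.mono_neutral_left) (auto simp: supp_def)

lemma lincombs_finite: "\<gamma> \<in> lincombs k \<Longrightarrow> finite (supp \<gamma>)"
  by (simp add: lincombs_def supp_def)

lemma image_genA: "p_lin n a B k ` lincombs k = genA n a B k"
proof
  show "p_lin n a B k ` lincombs k \<subseteq> genA n a B k"
  proof
    fix f assume "f \<in> p_lin n a B k ` lincombs k"
    then obtain \<gamma> where g: "\<gamma> \<in> lincombs k" "f = p_lin n a B k \<gamma>" by auto
    have "\<forall>F\<in>supp \<gamma>. (\<lambda>x. \<gamma> F * p_graph n a B k F x) \<in> genA n a B k"
      using g(1) by (auto simp: lincombs_def supp_def intro!: genA.smult genA.base)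
    then show "f \<in> genA n a B k"
      using genA_sum[OF lincombs_finite[OF g(1)], of "\<lambda>F x. \<gamma> F * p_graph n a B k F x"] g(2)
      by (simp add: p_lin_def)
  qed
next
  show "genA n a B k \<subseteq> p_lin n a B k ` lincombs k"
  proof
    fix f assume "f \<in> genA n a B k"
    then show "f \<in> p_lin n a B k ` lincombs k"
    proof (induction rule: genA.induct)
      case (base F)
      define \<gamma> :: "mgraph \<Rightarrow> 'a" where "\<gamma> = (\<lambda>G. if G = F then 1 else 0)"
      have L: "\<gamma> \<in> lincombs k" using base by (auto simp: \<gamma>_def lincombs_def)
      have P: "p_lin n a B k \<gamma> = p_graph n a B k F"
        using p_lin_U[of "{F}" \<gamma> n a B k] by (auto simp: fun_eq_iff supp_def \<gamma>_def)
      show ?case by (rule image_eqI[where f="p_lin n a B k", OF P[symmetric] L])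
    next
      case zero
      have L: "(\<lambda>_. 0) \<in> lincombs k" by (simp add: lincombs_def)
      have P: "p_lin n a B k (\<lambda>_. 0) = (\<lambda>_. 0)" by (simp add: p_lin_def supp_def)
      show ?case by (rule image_eqI[where f="p_lin n a B k", OF P[symmetric] L])
    next
      case (add f g)
      then obtain \<gamma>1 \<gamma>2 where g: "\<gamma>1 \<in> lincombs k" "f = p_lin n a B k \<gamma>1" "\<gamma>2 \<in> lincombs k" "g = p_lin n a B k \<gamma>2"
        by auto
      define U where "U = supp \<gamma>1 \<union> supp \<gamma>2"
      have fU: "finite U" using g by (simp add: U_def lincombs_finite)
      have L: "(\<lambda>F. \<gamma>1 F + \<gamma>2 F) \<in> lincombs k"
      proof -
        have sb: "{F. \<gamma>1 F + \<gamma>2 F \<noteq> 0} \<subseteq> {F. \<gamma>1 F \<noteq> 0} \<union> {F. \<gamma>2 F \<noteq> 0}" by auto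
        have "finite ({F. \<gamma>1 F \<noteq> 0} \<union> {F. \<gamma>2 F \<noteq> 0})"
          using lincombs_finite[OF g(1)] lincombs_finite[OF g(3)] by (simp add: supp_def)
        then have "finite {F. \<gamma>1 F + \<gamma>2 F \<noteq> 0}" using sb finite_subset by blast
        moreover have "\<forall>F. \<gamma>1 F + \<gamma>2 F \<noteq> 0 \<longrightarrow> F \<in> klgraphs k"
          using g(1,3) unfolding lincombs_def by (metis (mono_tags, lifting) add_0 mem_Collect_eq add.right_neutral)
        ultimately show ?thesis unfolding lincombs_def by blast
      qed
      have sub: "supp (\<lambda>F. \<gamma>1 F + \<gamma>2 F) \<subseteq> U" by (auto simp: U_def supp_def)
      have s1: "supp \<gamma>1 \<subseteq> U" and s2: "supp \<gamma>2 \<subseteq> U" by (auto simp: U_def)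
      have e: "p_lin n a B k (\<lambda>F. \<gamma>1 F + \<gamma>2 F) x = p_lin n a B k \<gamma>1 x + p_lin n a B k \<gamma>2 x" for x
        unfolding p_lin_U[OF fU sub] p_lin_U[OF fU s1] p_lin_U[OF fU s2]
        by (simp add: sum.distrib[symmetric] distrib_right)
      have P: "p_lin n a B k (\<lambda>F. \<gamma>1 F + \<gamma>2 F) = (\<lambda>x. f x + g x)"
        using g e by auto
      show ?case by (rule image_eqI[where f="p_lin n a B k", OF P[symmetric] L])
    next
      case (smult f c)
      then obtain \<gamma> where g: "\<gamma> \<in> lincombs k" "f = p_lin n a B k \<gamma>" by auto
      have fU: "finite (supp \<gamma>)" using g lincombs_finite by blast
      have L: "(\<lambda>F. c * \<gamma> F) \<in> lincombs k"
      proof -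
        have "{F. c * \<gamma> F \<noteq> 0} \<subseteq> {F. \<gamma> F \<noteq> 0}" by auto
        then have "finite {F. c * \<gamma> F \<noteq> 0}" using fU finite_subset unfolding supp_def by blast
        then show ?thesis using g(1) unfolding lincombs_def by auto
      qed
      have sub: "supp (\<lambda>F. c * \<gamma> F) \<subseteq> supp \<gamma>" by (auto simp: supp_def)
      have e: "p_lin n a B k (\<lambda>F. c * \<gamma> F) x = c * p_lin n a B k \<gamma> x" for x
        unfolding p_lin_U[OF fU sub] p_lin_U[OF fU subset_refl]
        by (simp add: sum_distrib_left mult_ac)
      have P: "p_lin n a B k (\<lambda>F. c * \<gamma> F) = (\<lambda>x. c * f x)" using g e by auto
      show ?case by (rule image_eqI[where f="p_lin n a B k", OF P[symmetric] L])
    qed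
  qed
qed

lemma genA_unlabel:
  assumes "f \<in> genA n a B (m+r)" "eqv n a B m x y" "length x = m" "length y = m"
  shows "(\<Sum>ws\<in>idx_lists n r. prod_list (map a ws) * f (x@ws)) =
         (\<Sum>ws\<in>idx_lists n r. prod_list (map a ws) * f (y@ws))"
  using assms(1)
proof (induction rule: genA.induct)
  case (base F)
  have F: "is_graph F" "m + r \<le> fst F" "F \<in> klgraphs m" using base by (auto simp: klgraphs_def)
  show ?case using p_graph_unlabel[OF F(1,2) assms(3), of n a B] p_graph_unlabel[OF F(1,2) assms(4), of n a B]
      assms(2) F(3) by (simp add: eqv_def)
next
  case zero then show ?case by simp
next
  case (add f g)
  then show ?case by (simp add: distrib_left sum.distrib)
next
  case (smult f c)
  then have "(\<Sum>ws\<in>idx_lists n r. c * (prod_list (map a ws) * f (x@ws))) =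
         (\<Sum>ws\<in>idx_lists n r. c * (prod_list (map a ws) * f (y@ws)))"
    by (simp add: sum_distrib_left[symmetric])
  then show ?case by (simp add: mult_ac)
qed

lemma hom_lprod:
  assumes "F' \<in> klgraphs k" "F \<in> klgraphs k"
  shows "hom n a B (lprod k F' F) =
    (\<Sum>xs\<in>idx_lists n k. prod_list (map a xs) * p_graph n a B k F' xs * p_graph n a B k F xs)"
proof -
  have G: "lprod k F' F \<in> klgraphs k" using lprod_klgraph[OF assms] .
  then have Gg: "is_graph (lprod k F' F)" "0 + k \<le> fst (lprod k F' F)" by (auto simp: klgraphs_def)
  have "hom n a B (lprod k F' F) = p_graph n a B 0 (lprod k F' F) []"
    using p_graph_hom[OF Gg(1), of n a B] by simp
  also have "\<dots> = (\<Sum>xs\<in>idx_lists n k. prod_list (map a xs) * p_graph n a B (0+k) (lprod k F' F) ([]@xs))"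
    using p_graph_unlabel[OF Gg, of "[]" n a B] by simp
  also have "\<dots> = (\<Sum>xs\<in>idx_lists n k. prod_list (map a xs) * p_graph n a B k F' xs * p_graph n a B k F xs)"
    using p_graph_lprod[OF assms, where n=n and a=a and B=B] by (intro sum.cong) (auto simp: mult_ac)
  finally show ?thesis .
qed

lemma hom_prod_formula:
  assumes "\<gamma> \<in> lincombs k" "F \<in> klgraphs k"
  shows "hom_prod n a B k \<gamma> F =
    (\<Sum>xs\<in>idx_lists n k. prod_list (map a xs) * p_lin n a B k \<gamma> xs * p_graph n a B k F xs)"
proof -
  have sk: "\<And>F'. F' \<in> supp \<gamma> \<Longrightarrow> F' \<in> klgraphs k" using assms(1) by (auto simp: lincombs_def supp_def)
  have "hom_prod n a B k \<gamma> F = (\<Sum>F'\<in>supp \<gamma>. \<gamma> F' *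
      (\<Sum>xs\<in>idx_lists n k. prod_list (map a xs) * p_graph n a B k F' xs * p_graph n a B k F xs))"
    unfolding hom_prod_def using hom_lprod[OF sk assms(2), where n=n and a=a and B=B] by (intro sum.cong) auto
  also have "\<dots> = (\<Sum>xs\<in>idx_lists n k. \<Sum>F'\<in>supp \<gamma>. \<gamma> F' * (prod_list (map a xs) * p_graph n a B k F' xs * p_graph n a B k F xs))"
    by (simp add: sum_distrib_left sum.swap[of _ "supp \<gamma>"])
  also have "\<dots> = (\<Sum>xs\<in>idx_lists n k. prod_list (map a xs) * p_lin n a B k \<gamma> xs * p_graph n a B k F xs)"
    unfolding p_lin_def by (intro sum.cong) (auto simp: sum_distrib_left sum_distrib_right mult_ac)
  finally show ?thesis .
qed


lemma eqv_edge:
  assumes "eqv n a B m s t" "s \<in> idx_lists n m" "t \<in> idx_lists n m" "u < m" "v < m"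
  shows "B (s!u) (s!v) = B (t!u) (t!v)"
  using assms p_graph_edge[of u m v s n a B] p_graph_edge[of u m v t n a B] edge_graph[of u m v]
  by (auto simp: eqv_def)

lemma ids_idx: "[0..<n] \<in> idx_lists n n" by (auto simp: idx_lists_def)

lemma app_idx: "x \<in> idx_lists n k \<Longrightarrow> ws \<in> idx_lists n r \<Longrightarrow> x @ ws \<in> idx_lists n (k + r)"
  by (auto simp: idx_lists_def)

lemma twin_eq:
  assumes "twin_free n B" "i < n" "j < n" "\<forall>l<n. B i l = B j l"
  shows "i = j"
  using assms unfolding twin_free_def by blast

lemma sum_idx_1: "(\<Sum>ws\<in>idx_lists n 1. f ws) = (\<Sum>w<n. f [w])"
  using sum_idx_Suc[where n=n and r=0 and f=f] by simp

lemma top: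
  assumes tf: "twin_free n B" and an: "\<forall>i<n. a i \<noteq> 0"
    and x: "x \<in> idx_lists n k" and y: "y \<in> idx_lists n k" and ws: "ws \<in> idx_lists n n"
    and e: "eqv n a B (k+n) (y@ws) (x@[0..<n])"
  shows "\<exists>g\<in>Aut n a B. map g x = y \<and> map g [0..<n] = ws"
proof -
  define N where "N = k + n"
  define z where "z = x @ [0..<n]"
  define t where "t = y @ ws"
  have lx: "length x = k" and ly: "length y = k" and lws: "length ws = n"
    using x y ws by (auto simp: idx_lists_def)
  have zi: "z \<in> idx_lists n N" using app_idx[OF x ids_idx] by (simp add: z_def N_def)
  have ti: "t \<in> idx_lists n N" using app_idx[OF y ws] by (simp add: t_def N_def)
  have e': "eqv n a B N t z" using e by (simp add: N_def t_def z_def)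
  have wsl: "\<And>i. i < n \<Longrightarrow> ws!i < n" using idx_nth[OF ws] .
  have xl: "\<And>j. j < k \<Longrightarrow> x!j < n" using idx_nth[OF x] .
  have tk: "\<And>i. t!(k+i) = ws!i" by (simp add: t_def nth_append lx ly)
  have zk: "\<And>i. i < n \<Longrightarrow> z!(k+i) = i" by (simp add: z_def nth_append lx)
  have tj: "\<And>j. j < k \<Longrightarrow> t!j = y!j" by (simp add: t_def nth_append ly)
  have zj: "\<And>j. j < k \<Longrightarrow> z!j = x!j" by (simp add: z_def nth_append lx)
  have T1: "\<And>i j. i < n \<Longrightarrow> j < n \<Longrightarrow> B (ws!i) (ws!j) = B i j"
  proof -
    fix i j assume "i < n" "j < n"
    then show "B (ws!i) (ws!j) = B i j"
      using eqv_edge[OF e' ti zi, of "k+i" "k+j"] tk zk by (simp add: N_def)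
  qed
  have inj: "inj_on (\<lambda>i. ws!i) {0..<n}"
  proof (rule inj_onI)
    fix i j assume ij: "i \<in> {0..<n}" "j \<in> {0..<n}" "ws!i = ws!j"
    then have "\<forall>l<n. B i l = B j l" using T1 by (metis atLeastLessThan_iff)
    then show "i = j" using twin_eq[OF tf] ij by auto
  qed
  have "(\<lambda>i. ws!i) ` {0..<n} \<subseteq> {0..<n}" using wsl by auto
  then have imgws: "(\<lambda>i. ws!i) ` {0..<n} = {0..<n}"
    using endo_inj_surj[OF _ _ inj] by auto
  have surj: "\<And>l. l < n \<Longrightarrow> \<exists>i<n. ws!i = l"
    using imgws by (metis atLeastLessThan_iff imageE lessThan_atLeast0 lessThan_iff)
  define g where "g = (\<lambda>i. if i < n then ws!i else i)"
  have gperm: "g permutes {0..<n}"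
  proof (rule bij_imp_permutes)
    have "inj_on g {0..<n}" using inj by (auto simp: inj_on_def g_def)
    moreover have "g ` {0..<n} = {0..<n}" using imgws by (auto simp: g_def image_def)
    ultimately show "bij_betw g {0..<n} {0..<n}" by (simp add: bij_betw_def)
  qed (simp add: g_def)
  have rows: "\<And>w v. w < n \<Longrightarrow> v < n \<Longrightarrow> (\<forall>l<n. B w (ws!l) = B v (ws!l)) \<Longrightarrow> w = v"
  proof -
    fix w v assume wv: "w < n" "v < n" "\<forall>l<n. B w (ws!l) = B v (ws!l)"
    have "\<forall>l'<n. B w l' = B v l'"
    proof (intro allI impI)
      fix l' assume "l' < n"
      then obtain l where "l < n" "ws!l = l'" using surj by blast
      then show "B w l' = B v l'" using wv by auto
    qed
    then show "w = v" using twin_eq[OF tf wv(1,2)] by blast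
  qed
  have T3: "\<And>j. j < k \<Longrightarrow> y!j = g (x!j)"
  proof -
    fix j assume j: "j < k"
    have "\<forall>l<n. B (y!j) (ws!l) = B (ws!(x!j)) (ws!l)"
    proof (intro allI impI)
      fix l assume l: "l < n"
      have "B (y!j) (ws!l) = B (x!j) l"
        using eqv_edge[OF e' ti zi, of j "k+l"] j l tk zk tj zj by (simp add: N_def)
      moreover have "B (ws!(x!j)) (ws!l) = B (x!j) l"
        using eqv_edge[OF e' ti zi, of "k + x!j" "k+l"] j l tk zk xl by (simp add: N_def)
      ultimately show "B (y!j) (ws!l) = B (ws!(x!j)) (ws!l)" by simp
    qed
    moreover have "y!j < n" using idx_nth[OF y j] .
    ultimately have "y!j = ws!(x!j)" using rows wsl xl j by blast
    then show "y!j = g (x!j)" using xl j by (simp add: g_def)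
  qed
  have T4: "\<And>h. h < n \<Longrightarrow> a (g h) = a h"
  proof -
    fix h assume h: "h < n"
    have zh: "z @ [h] \<in> idx_lists n (N + 1)" using zi h by (auto simp: idx_lists_def)
    define f where "f = ind n a B (N+1) (z @ [h])"
    have fA: "f \<in> genA n a B (N+1)" using ind_genA[OF zh] by (simp add: f_def)
    have lz: "length z = N" "length t = N" using zi ti by (auto simp: idx_lists_def)
    have U: "(\<Sum>w<n. a w * f (z@[w])) = (\<Sum>w<n. a w * f (t@[w]))"
      using genA_unlabel[OF fA eqv_sym[OF e'] lz] by (simp add: sum_idx_Suc)
    have fz: "\<And>w. w < n \<Longrightarrow> f (z@[w]) = (if w = h then 1 else 0)"
    proof -
      fix w assume w: "w < n"
      have zw: "z @ [w] \<in> idx_lists n (N + 1)" using zi w by (auto simp: idx_lists_def)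
      have "eqv n a B (N+1) (z@[w]) (z@[h]) \<Longrightarrow> w = h"
      proof -
        assume E: "eqv n a B (N+1) (z@[w]) (z@[h])"
        have "\<forall>l<n. B w l = B h l"
        proof (intro allI impI)
          fix l assume l: "l < n"
          show "B w l = B h l"
            using eqv_edge[OF E zw zh, of N "k+l"] l zk lz by (simp add: N_def nth_append)
        qed
        then show "w = h" using twin_eq[OF tf w h] by blast
      qed
      then show "f (z@[w]) = (if w = h then 1 else 0)"
        using zw by (auto simp: f_def ind_def eqv_refl)
    qed
    have L: "(\<Sum>w<n. a w * f (z@[w])) = a h"
    proof -
      have "(\<Sum>w<n. a w * f (z@[w])) = (\<Sum>w<n. if w = h then a w else 0)"
        using fz by (intro sum.cong) auto
      then show ?thesis using h by (simp add: sum.delta)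
    qed
    have ft: "\<And>w. w < n \<Longrightarrow> f (t@[w]) \<noteq> 0 \<Longrightarrow> w = ws!h"
    proof -
      fix w assume w: "w < n" and nz: "f (t@[w]) \<noteq> 0"
      then have E: "eqv n a B (N+1) (t@[w]) (z@[h])" and tw: "t@[w] \<in> idx_lists n (N+1)"
        by (auto simp: f_def ind_def split: if_splits)
      have "\<forall>l<n. B w (ws!l) = B (ws!h) (ws!l)"
      proof (intro allI impI)
        fix l assume l: "l < n"
        have "B w (ws!l) = B h l"
          using eqv_edge[OF E tw zh, of N "k+l"] l zk tk lz by (simp add: N_def nth_append)
        then show "B w (ws!l) = B (ws!h) (ws!l)" using T1[OF h l] by simp
      qed
      then show "w = ws!h" using rows[OF w wsl[OF h]] by blast
    qed
    have R: "(\<Sum>w<n. a w * f (t@[w])) = a (ws!h) * f (t@[ws!h])"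
    proof -
      have "(\<Sum>w<n. a w * f (t@[w])) = (\<Sum>w<n. if w = ws!h then a w * f (t@[w]) else 0)"
        using ft by (intro sum.cong) auto
      also have "\<dots> = a (ws!h) * f (t@[ws!h])" using wsl[OF h] by (simp add: sum.delta)
      finally show ?thesis .
    qed
    have f01: "f (t@[ws!h]) = 0 \<or> f (t@[ws!h]) = 1" by (simp add: f_def ind_def)
    have "a h = a (ws!h) * f (t@[ws!h])" using U L R by simp
    then have "a h = a (ws!h)" using f01 an h by auto
    then show "a (g h) = a h" using h by (simp add: g_def)
  qed
  have gB: "\<And>i j. i < n \<Longrightarrow> j < n \<Longrightarrow> B (g i) (g j) = B i j" using T1 by (simp add: g_def)
  have "g \<in> Aut n a B" using gperm T4 gB by (simp add: Aut_def)
  moreover have "map g x = y" using T3 lx ly by (simp add: list_eq_iff_nth_eq)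
  moreover have "map g [0..<n] = ws" using lws by (simp add: list_eq_iff_nth_eq g_def)
  ultimately show ?thesis by blast
qed


lemma prod_list_aut:
  assumes "g \<in> Aut n a B" "xs \<in> idx_lists n k"
  shows "prod_list (map a (map g xs)) = prod_list (map a xs)"
proof -
  have "map (a \<circ> g) xs = map a xs"
    using assms by (intro map_cong) (auto simp: Aut_def idx_lists_def)
  then show ?thesis by (simp only: map_map)
qed

lemma prod_list_nz:
  assumes "\<forall>i<n. a i \<noteq> (0::'f::field)" "xs \<in> idx_lists n k"
  shows "prod_list (map a xs) \<noteq> 0"
  using assms by (auto simp: prod_list_zero_iff idx_lists_def)

lemma main_orbit:
  fixes a :: "nat \<Rightarrow> 'f::field_char_0"
  assumes tf: "twin_free n B" and an: "\<forall>i<n. a i \<noteq> 0"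
    and x: "x \<in> idx_lists n k" and y: "y \<in> idx_lists n k" and exy: "eqv n a B k x y"
  shows "\<exists>g\<in>Aut n a B. map g x = y"
proof -
  define z where "z = x @ [0..<n]"
  have zi: "z \<in> idx_lists n (k+n)" using app_idx[OF x ids_idx] by (simp add: z_def)
  define e where "e = ind n a B (k+n) z"
  have eA: "e \<in> genA n a B (k+n)" using ind_genA[OF zi] by (simp add: e_def)
  have lx: "length x = k" and ly: "length y = k" using x y by (auto simp: idx_lists_def)
  have U: "(\<Sum>ws\<in>idx_lists n n. prod_list (map a ws) * e (x@ws)) =
           (\<Sum>ws\<in>idx_lists n n. prod_list (map a ws) * e (y@ws))"
    using genA_unlabel[OF eA exy lx ly] .
  define c where "c = prod_list (map a [0..<n])"
  have c0: "c \<noteq> 0" using prod_list_nz[OF an ids_idx] by (simp add: c_def)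
  define P where "P = (\<lambda>ws. eqv n a B (k+n) (x@ws) z)"
  have terms: "\<And>ws. ws \<in> idx_lists n n \<Longrightarrow> prod_list (map a ws) * e (x@ws) = (if P ws then c else 0)"
  proof -
    fix ws assume ws: "ws \<in> idx_lists n n"
    show "prod_list (map a ws) * e (x@ws) = (if P ws then c else 0)"
    proof (cases "P ws")
      case True
      then obtain g where g: "g \<in> Aut n a B" "map g [0..<n] = ws"
        using top[OF tf an x x ws] by (auto simp: P_def z_def)
      have "prod_list (map a ws) = c"
        using prod_list_aut[OF g(1) ids_idx] g(2) by (simp add: c_def)
      moreover have "e (x@ws) = 1" using True app_idx[OF x ws] by (simp add: e_def ind_def P_def)
      ultimately show ?thesis using True by simp
    next
      case False
      then show ?thesis by (simp add: e_def ind_def P_def)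
    qed
  qed
  have "(\<Sum>ws\<in>idx_lists n n. prod_list (map a ws) * e (x@ws)) = (\<Sum>ws\<in>idx_lists n n. if P ws then c else 0)"
    using terms by (intro sum.cong) auto
  also have "\<dots> = (\<Sum>ws\<in>{ws \<in> idx_lists n n. P ws}. c)"
    using sum.inter_filter[of "idx_lists n n" "\<lambda>_. c" P] by simp
  also have "\<dots> = of_nat (card {ws \<in> idx_lists n n. P ws}) * c" by simp
  finally have LHS: "(\<Sum>ws\<in>idx_lists n n. prod_list (map a ws) * e (x@ws)) = of_nat (card {ws \<in> idx_lists n n. P ws}) * c" .
  have "[0..<n] \<in> {ws \<in> idx_lists n n. P ws}" using ids_idx eqv_refl by (simp add: P_def z_def)
  then have "card {ws \<in> idx_lists n n. P ws} \<noteq> 0" by (auto simp: card_eq_0_iff)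
  then have "(of_nat (card {ws \<in> idx_lists n n. P ws}) :: 'f) \<noteq> 0" by (simp only: of_nat_eq_0_iff) simp
  then have "(of_nat (card {ws \<in> idx_lists n n. P ws}) :: 'f) * c \<noteq> 0" using c0 by simp
  then have "(\<Sum>ws\<in>idx_lists n n. prod_list (map a ws) * e (y@ws)) \<noteq> 0"
    using U LHS by metis
  then obtain ws where ws: "ws \<in> idx_lists n n" "prod_list (map a ws) * e (y@ws) \<noteq> 0"
    by (rule sum.not_neutral_contains_not_neutral)
  then have "eqv n a B (k+n) (y@ws) z" by (auto simp: e_def ind_def split: if_splits)
  then show ?thesis using top[OF tf an x y ws(1)] by (auto simp: z_def)
qed


lemma genA_inv:
  assumes "f \<in> genA n a B k" "g \<in> Aut n a B"
  shows "f (map (inv g) ys) = f ys"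
  using assms(1)
proof (induction rule: genA.induct)
  case (base F)
  show ?case
  proof (cases "ys \<in> idx_lists n k")
    case True
    have xi: "map (inv g) ys \<in> idx_lists n k"
      using True aut_inv_lt[OF assms(2)] by (fastforce simp: idx_lists_def)
    have "map g (map (inv g) ys) = ys" by (simp add: aut_inv2[OF assms(2)] map_idI)
    then show ?thesis using p_graph_aut[OF assms(2) base xi] by simp
  next
    case False
    have "map (inv g) ys \<notin> idx_lists n k"
    proof
      assume "map (inv g) ys \<in> idx_lists n k"
      then have "map g (map (inv g) ys) \<in> idx_lists n k" by (rule map_aut_idx[OF assms(2)])
      moreover have "map g (map (inv g) ys) = ys" by (simp add: aut_inv2[OF assms(2)] map_idI)
      ultimately show False using False by simp
    qed
    then show ?thesis using False by (simp add: p_graph_out)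
  qed
qed auto

theorem theorem2p1:
  fixes n k :: nat and a :: "nat \<Rightarrow> 'f::field_char_0" and B :: "nat \<Rightarrow> nat \<Rightarrow> 'f"
  assumes "n \<ge> 1"
    and "\<forall>i<n. a i \<noteq> 0"
    and "\<forall>i<n. \<forall>j<n. B i j = B j i"
    and "twin_free n B"
  shows "{\<gamma> \<in> lincombs k. p_lin n a B k \<gamma> = (\<lambda>_. 0)} = ideal_I n a B k
       \<and> p_lin n a B k ` lincombs k = invariant_tensors n a B k"
proof
  note an = assms(2) and tf = assms(4)
  define w where "w = (\<lambda>xs. prod_list (map a xs))"
  have worb: "\<And>xs y. xs \<in> idx_lists n k \<Longrightarrow> y \<in> idx_lists n k \<Longrightarrow> eqv n a B k xs y \<Longrightarrow> w xs = w y"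
  proof -
    fix xs y assume xs: "xs \<in> idx_lists n k" and y: "y \<in> idx_lists n k" and e: "eqv n a B k xs y"
    obtain g where "g \<in> Aut n a B" "map g xs = y" using main_orbit[OF tf an xs y e] by blast
    then show "w xs = w y" using prod_list_aut[of g n a B xs k] xs by (simp add: w_def)
  qed
  show "{\<gamma> \<in> lincombs k. p_lin n a B k \<gamma> = (\<lambda>_. 0)} = ideal_I n a B k"
  proof
    show "{\<gamma> \<in> lincombs k. p_lin n a B k \<gamma> = (\<lambda>_. 0)} \<subseteq> ideal_I n a B k"
      using hom_prod_formula by (fastforce simp: ideal_I_def)
  next
    show "ideal_I n a B k \<subseteq> {\<gamma> \<in> lincombs k. p_lin n a B k \<gamma> = (\<lambda>_. 0)}"
    proof
      fix \<gamma> assume "\<gamma> \<in> ideal_I n a B k"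
      then have g: "\<gamma> \<in> lincombs k" and hz: "\<forall>F\<in>klgraphs k. hom_prod n a B k \<gamma> F = 0"
        by (auto simp: ideal_I_def)
      define P where "P = p_lin n a B k \<gamma>"
      have PA: "P \<in> genA n a B k" using image_genA[of n a B k] g by (auto simp: P_def)
      have Z: "\<And>f. f \<in> genA n a B k \<Longrightarrow> (\<Sum>xs\<in>idx_lists n k. w xs * P xs * f xs) = 0"
      proof -
        fix f assume "f \<in> genA n a B k"
        then show "(\<Sum>xs\<in>idx_lists n k. w xs * P xs * f xs) = 0"
        proof (induction rule: genA.induct)
          case (base F)
          then show ?case using hz hom_prod_formula[OF g base, where n=n and a=a and B=B] by (simp add: w_def P_def)
        next
          case zero then show ?case by simp
        next
          case (add f h)
          then show ?case by (simp add: distrib_left sum.distrib)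
        next
          case (smult f c)
          have "(\<Sum>xs\<in>idx_lists n k. w xs * P xs * (c * f xs)) = c * (\<Sum>xs\<in>idx_lists n k. w xs * P xs * f xs)"
            by (simp add: sum_distrib_left mult_ac)
          then show ?case using smult.IH by simp
        qed
      qed
      have "P y = 0" for y
      proof (cases "y \<in> idx_lists n k")
        case False then show ?thesis using genA_out[OF PA] by simp
      next
        case True
        define f where "f = (\<lambda>t. P t * ind n a B k y t)"
        have fA: "f \<in> genA n a B k" unfolding f_def by (rule genA_mult[OF PA ind_genA[OF True]])
        define C where "C = {xs \<in> idx_lists n k. eqv n a B k xs y}"
        have "(\<Sum>xs\<in>idx_lists n k. w xs * P xs * f xs) = (\<Sum>xs\<in>idx_lists n k. if eqv n a B k xs y then w y * P y * P y else 0)"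
        proof (intro sum.cong refl)
          fix xs assume xs: "xs \<in> idx_lists n k"
          show "w xs * P xs * f xs = (if eqv n a B k xs y then w y * P y * P y else 0)"
          proof (cases "eqv n a B k xs y")
            case True
            then show ?thesis using worb[OF xs \<open>y \<in> idx_lists n k\<close> True] genA_eqv[OF PA True] xs
              by (simp add: f_def ind_def)
          next
            case False then show ?thesis by (simp add: f_def ind_def)
          qed
        qed
        also have "\<dots> = (\<Sum>xs\<in>C. w y * P y * P y)"
          using sum.inter_filter[of "idx_lists n k" "\<lambda>_. w y * P y * P y" "\<lambda>xs. eqv n a B k xs y"]
          by (simp add: C_def)
        also have "\<dots> = of_nat (card C) * (w y * P y * P y)" by simp
        finally have "of_nat (card C) * (w y * P y * P y) = 0" using Z[OF fA] by simp
        moreover have "y \<in> C" using True eqv_refl by (simp add: C_def)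
        then have "card C \<noteq> 0" by (auto simp: C_def card_eq_0_iff)
        then have "(of_nat (card C) :: 'f) \<noteq> 0" by (simp only: of_nat_eq_0_iff) simp
        moreover have "w y \<noteq> 0" using prod_list_nz[OF an True] by (simp add: w_def)
        ultimately show ?thesis by simp
      qed
      then show "\<gamma> \<in> {\<gamma> \<in> lincombs k. p_lin n a B k \<gamma> = (\<lambda>_. 0)}"
        using g by (auto simp: P_def)
    qed
  qed
next
  note an = assms(2) and tf = assms(4)
  show "p_lin n a B k ` lincombs k = invariant_tensors n a B k"
    unfolding image_genA
  proof
    show "genA n a B k \<subseteq> invariant_tensors n a B k"
    proof
      fix f assume f: "f \<in> genA n a B k"
      have "f \<in> tensors n k" using genA_out[OF f] by (simp add: tensors_def)
      moreover have "\<forall>g\<in>Aut n a B. tensor_act g f = f"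
        using genA_inv[OF f] by (auto simp: tensor_act_def fun_eq_iff)
      ultimately show "f \<in> invariant_tensors n a B k" by (simp add: invariant_tensors_def)
    qed
  next
    show "invariant_tensors n a B k \<subseteq> genA n a B k"
    proof
      fix T assume T: "T \<in> invariant_tensors n a B k"
      then have T0: "\<And>xs. xs \<notin> idx_lists n k \<Longrightarrow> T xs = 0"
        and Tinv: "\<And>g. g \<in> Aut n a B \<Longrightarrow> tensor_act g T = T"
        by (auto simp: invariant_tensors_def tensors_def)
      define C where "C = (\<lambda>x. {y \<in> idx_lists n k. eqv n a B k y x})"
      have Teq: "\<And>t x. t \<in> idx_lists n k \<Longrightarrow> x \<in> idx_lists n k \<Longrightarrow> eqv n a B k t x \<Longrightarrow> T x = T t"
      proof -
        fix t x assume t: "t \<in> idx_lists n k" and x: "x \<in> idx_lists n k" and e: "eqv n a B k t x"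
        obtain g where g: "g \<in> Aut n a B" "map g t = x" using main_orbit[OF tf an t x e] by blast
        have "T (map (inv g) x) = T x" using Tinv[OF g(1)] by (simp add: tensor_act_def fun_eq_iff)
        moreover have "map (inv g) x = t" using g by (simp add: aut_inv1[OF g(1)] map_idI flip: g(2))
        ultimately show "T x = T t" by simp
      qed
      define S where "S = (\<lambda>t. \<Sum>x\<in>idx_lists n k. (T x / of_nat (card (C x))) * ind n a B k x t)"
      have SA: "S \<in> genA n a B k"
        unfolding S_def
      proof (rule genA_sum)
        show "\<forall>x\<in>idx_lists n k. (\<lambda>t. T x / of_nat (card (C x)) * ind n a B k x t) \<in> genA n a B k"
          by (intro ballI genA.smult ind_genA)
      qed simp
      have "T = S"
      proof
        fix t
        show "T t = S t"
        proof (cases "t \<in> idx_lists n k")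
          case False then show ?thesis using T0 by (simp add: S_def ind_def)
        next
          case True
          have "S t = (\<Sum>x\<in>idx_lists n k. if eqv n a B k x t then T t / of_nat (card (C t)) else 0)"
            unfolding S_def
          proof (intro sum.cong refl)
            fix x assume x: "x \<in> idx_lists n k"
            show "T x / of_nat (card (C x)) * ind n a B k x t = (if eqv n a B k x t then T t / of_nat (card (C t)) else 0)"
            proof (cases "eqv n a B k x t")
              case e: True
              then have "C x = C t" unfolding C_def using eqv_sym eqv_trans by blast
              then show ?thesis using e Teq[OF True x eqv_sym[OF e]] True eqv_sym[OF e]
                by (simp add: ind_def)
            next
              case False
              then have "\<not> eqv n a B k t x" using eqv_sym by blast
              then show ?thesis using False by (simp add: ind_def)
            qed
          qed
          also have "\<dots> = (\<Sum>x\<in>C t. T t / of_nat (card (C t)))"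
            using sum.inter_filter[of "idx_lists n k" "\<lambda>_. T t / of_nat (card (C t))" "\<lambda>x. eqv n a B k x t"]
            by (simp add: C_def)
          also have "\<dots> = of_nat (card (C t)) * (T t / of_nat (card (C t)))" by simp
          also have "\<dots> = T t"
          proof -
            have "t \<in> C t" using True eqv_refl by (simp add: C_def)
            then have "card (C t) \<noteq> 0" by (auto simp: C_def card_eq_0_iff)
            then have "(of_nat (card (C t)) :: 'f) \<noteq> 0" by (simp only: of_nat_eq_0_iff) simp
            then show ?thesis by simp
          qed
          finally show ?thesis by simp
        qed
      qed
      then show "T \<in> genA n a B k" using SA by simp
    qed
  qed
qed

end
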